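(* Let $(\mathsf K,\mathsf D)$ be a differential ring, $a_1\in\mathsf K$, $\nabla:=\mathsf D+a_1\in\mathsf K\langle\mathsf D\rangle$, and $u\in\mathsf K$. For every $m\ge0$, $$(\nabla+u)^m=\sum_{j=0}^m\binom mj Q_{m-j}(u)\,\nabla^j$$ in $\mathsf K\langle\mathsf D\rangle$.
   Context: $(\mathsf K,\mathsf D)$: unital associative (possibly noncommutative) ring with derivation; $\mathsf K\langle\mathsf D\rangle$: Ore algebra with $\mathsf D a=a\mathsf D+\mathsf D(a)$. Define the derivation $\Delta_{a_1}(b):=\mathsf D(b)+a_1b-ba_1$ on $\mathsf K$. The covariant Bell polynomials are $Q_0(u)=1$, $Q_{m+1}(u)=\Delta_{a_1}(Q_m(u))+u\,Q_m(u)$. *)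

theory Defs
  imports Main
begin

definition is_derivation :: "('a::ring_1 \<Rightarrow> 'a) \<Rightarrow> bool" where
  "is_derivation D \<longleftrightarrow> (\<forall>a b. D (a + b) = D a + D b \<and> D (a * b) = D a * b + a * D b)"

(* Elements of the Ore algebra K<D>: finite sums  \<Sum>_i c_i D^i  (coefficients on the left),
   represented by the list [c_0, c_1, ...]; trailing zeros are allowed. *)
type_synonym 'a ore = "'a list"

definition ore_coef :: "'a::zero ore \<Rightarrow> nat \<Rightarrow> 'a" where
  "ore_coef p i = (if i < length p then p ! i else 0)"

definition ore_eq :: "'a::zero ore \<Rightarrow> 'a ore \<Rightarrow> bool" where
  "ore_eq p q \<longleftrightarrow> (\<forall>i. ore_coef p i = ore_coef q i)"

definition ore_const :: "'a \<Rightarrow> 'a ore" where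
  "ore_const a = [a]"

definition ore_D :: "'a::{zero,one} ore" where
  "ore_D = [0, 1]"

definition ore_add :: "'a::monoid_add ore \<Rightarrow> 'a ore \<Rightarrow> 'a ore" where
  "ore_add p q = map (\<lambda>i. ore_coef p i + ore_coef q i) [0..<max (length p) (length q)]"

(* Multiplication in K<D>, determined by  D a = a D + D(a), i.e.
   (a D^i)(b D^j) = \<Sum>_{k\<le>i} binom(i,k) a D^k(b) D^(i-k+j). *)
definition ore_mult :: "('a::ring_1 \<Rightarrow> 'a) \<Rightarrow> 'a ore \<Rightarrow> 'a ore \<Rightarrow> 'a ore" where
  "ore_mult D p q = map (\<lambda>n. \<Sum>i<length p. \<Sum>j<length q. \<Sum>k\<le>i.
       (if i - k + j = n then ore_coef p i * (of_nat (i choose k) * (D ^^ k) (ore_coef q j)) else 0))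
     [0..<length p + length q]"

primrec ore_pow :: "('a::ring_1 \<Rightarrow> 'a) \<Rightarrow> 'a ore \<Rightarrow> nat \<Rightarrow> 'a ore" where
  "ore_pow D p 0 = ore_const 1"
| "ore_pow D p (Suc m) = ore_mult D p (ore_pow D p m)"

definition ore_sum :: "'a::monoid_add ore list \<Rightarrow> 'a ore" where
  "ore_sum ps = foldr ore_add ps []"

definition Delta :: "('a::ring_1 \<Rightarrow> 'a) \<Rightarrow> 'a \<Rightarrow> 'a \<Rightarrow> 'a" where
  "Delta D a1 b = D b + a1 * b - b * a1"

primrec bellQ :: "('a::ring_1 \<Rightarrow> 'a) \<Rightarrow> 'a \<Rightarrow> nat \<Rightarrow> 'a \<Rightarrow> 'a" where
  "bellQ D a1 0 u = 1"
| "bellQ D a1 (Suc m) u = Delta D a1 (bellQ D a1 m u) + u * bellQ D a1 m u"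

end

theory Submission imports Defs begin

lemma coef_add: "ore_coef (ore_add p q) n = ore_coef p n + ore_coef q n"
  by (auto simp: ore_add_def ore_coef_def)

lemma coef_sum: "ore_coef (ore_sum ps) n = (\<Sum>p\<leftarrow>ps. ore_coef p n)"
proof (induction ps)
  case Nil then show ?case by (simp add: ore_sum_def ore_coef_def)
next
  case (Cons a ps) then show ?case by (simp add: ore_sum_def coef_add)
qed

lemma coef_sum_upt: "ore_coef (ore_sum (map f [0..<Suc m])) n = (\<Sum>j\<le>m. ore_coef (f j) n)"
  by (simp only: coef_sum map_map comp_def interv_sum_list_conv_sum_set_nat set_upt atLeast0LessThan lessThan_Suc_atMost)

lemma coef_mult: "ore_coef (ore_mult D p q) n = (\<Sum>i<length p. \<Sum>j<length q. \<Sum>k\<le>i.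
       (if i - k + j = n then ore_coef p i * (of_nat (i choose k) * (D ^^ k) (ore_coef q j)) else 0))"
proof (cases "n < length p + length q")
  case True
  then show ?thesis by (simp add: ore_mult_def ore_coef_def)
next
  case False
  then have "\<And>i j k. i < length p \<Longrightarrow> j < length q \<Longrightarrow> i + j - k \<noteq> n" by linarith
  then show ?thesis using False by (simp add: ore_mult_def ore_coef_def)
qed

lemma coef_mult_const: "ore_coef (ore_mult D (ore_const c) q) n = c * ore_coef q n"
  by (simp add: coef_mult ore_const_def if_distrib[of "\<lambda>x. c * x"] cong: if_cong) (simp add: ore_coef_def)

lemma deriv_0: "is_derivation D \<Longrightarrow> D 0 = 0"
  unfolding is_derivation_def by (metis add_cancel_left_left add_0)

lemma coef_mult_lin:
  assumes "is_derivation D"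
  shows "ore_coef (ore_mult D [c0, 1] q) n = c0 * ore_coef q n + D (ore_coef q n) + (if n > 0 then ore_coef q (n - 1) else 0)"
proof -
  have D0: "D 0 = 0" by (rule deriv_0[OF assms])
  have c01: "ore_coef [c0, 1] 0 = c0" "ore_coef [c0, 1] (Suc 0) = 1" by (simp_all add: ore_coef_def)
  have "ore_coef (ore_mult D [c0, 1] q) n = (\<Sum>j<length q. (if j = n then c0 * ore_coef q j else 0))
     + (\<Sum>j<length q. (if j = n then D (ore_coef q j) else 0)) + (\<Sum>j<length q. (if Suc j = n then ore_coef q j else 0))"
    unfolding coef_mult
    by (simp add: numeral_2_eq_2 lessThan_Suc atMost_Suc sum.distrib algebra_simps c01 sum_distrib_left if_distrib[of "\<lambda>x. c0 * x"] cong: if_cong)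
  also have "\<dots> = c0 * ore_coef q n + D (ore_coef q n) + (if n > 0 then ore_coef q (n - 1) else 0)"
    by (cases n) (auto simp: ore_coef_def D0)
  finally show ?thesis .
qed

lemma deriv_add: "is_derivation D \<Longrightarrow> D (a + b) = D a + D b"
  unfolding is_derivation_def by blast

lemma deriv_mult: "is_derivation D \<Longrightarrow> D (a * b) = D a * b + a * D b"
  unfolding is_derivation_def by blast

lemma deriv_sum: "is_derivation D \<Longrightarrow> D (\<Sum>j\<in>A. f j) = (\<Sum>j\<in>A. D (f j))"
  by (induction A rule: infinite_finite_induct) (simp_all add: deriv_0 deriv_add)

lemma deriv_of_nat: "is_derivation D \<Longrightarrow> D (of_nat k) = 0"
proof (induction k)
  case 0 then show ?case by (simp add: deriv_0)
next
  case (Suc k)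
  have "D 1 = D (1 * 1)" by simp
  also have "\<dots> = D 1 + D 1" using deriv_mult[OF Suc.prems, of 1 1] by (metis mult_1_left mult_1_right)
  finally have "D 1 = 0" by simp
  then show ?case using Suc deriv_add[OF Suc.prems] by simp
qed

lemma deriv_of_nat_mult: "is_derivation D \<Longrightarrow> D (of_nat k * x) = of_nat k * D x"
  by (simp add: deriv_mult deriv_of_nat)

lemma of_nat_left_comm: "(a::'a::ring_1) * (of_nat k * x) = of_nat k * (a * x)"
  by (metis mult.assoc mult_of_nat_commute)

lemma nab_u: "ore_add (ore_add ore_D (ore_const a1)) (ore_const u) = [a1 + u, (1::'a::ring_1)]"
  by (simp add: ore_add_def ore_D_def ore_const_def ore_coef_def upt_rec)

lemma nab: "ore_add ore_D (ore_const a1) = [a1, (1::'a::ring_1)]"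
  by (simp add: ore_add_def ore_D_def ore_const_def ore_coef_def upt_rec)

lemma coef_one: "ore_coef (ore_const 1) n = (if n = 0 then 1 else 0)"
  by (simp add: ore_const_def ore_coef_def)


theorem mainTheorem5:
  fixes D :: "'a::ring_1 \<Rightarrow> 'a" and a1 u :: 'a and m :: nat
  assumes "is_derivation D"
  shows "ore_eq
     (ore_pow D (ore_add (ore_add ore_D (ore_const a1)) (ore_const u)) m)
     (ore_sum (map (\<lambda>j. ore_mult D (ore_const (of_nat (m choose j) * bellQ D a1 (m - j) u))
                                   (ore_pow D (ore_add ore_D (ore_const a1)) j))
                   [0..<Suc m]))"
proof -
  note dv = assms
  define P where "P m n = ore_coef (ore_pow D [a1 + u, 1] m) n" for m n
  define N where "N j n = ore_coef (ore_pow D [a1, 1] j) n" for j n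
  define Q where "Q k = bellQ D a1 k u" for k
  have P0: "P 0 n = (if n = 0 then 1 else 0)" for n by (simp add: P_def coef_one)
  have PS: "P (Suc m) n = (a1 + u) * P m n + D (P m n) + (if n > 0 then P m (n - 1) else 0)" for m n
    by (simp add: P_def coef_mult_lin[OF dv])
  have N0: "N 0 n = (if n = 0 then 1 else 0)" for n by (simp add: N_def coef_one)
  have NS: "N (Suc j) n = a1 * N j n + D (N j n) + (if n > 0 then N j (n - 1) else 0)" for j n
    by (simp add: N_def coef_mult_lin[OF dv])
  have QS: "Q (Suc k) = D (Q k) + a1 * Q k - Q k * a1 + u * Q k" for k
    by (simp add: Q_def Delta_def)
  have claim: "\<forall>n. P m n = (\<Sum>j\<le>m. of_nat (m choose j) * Q (m - j) * N j n)"
  proof (induction m)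
    case 0 then show ?case by (simp add: P0 N0 Q_def)
  next
    case (Suc m)
    show ?case
    proof
      fix n
      define A where "A = (\<Sum>j\<le>m. of_nat (m choose j) * Q (m - j) * N (Suc j) n)
          + (\<Sum>j\<le>m. of_nat (m choose j) * Q (Suc m - j) * N j n)"
      have "P (Suc m) n = (\<Sum>j\<le>m. (a1 + u) * (of_nat (m choose j) * Q (m - j) * N j n)
          + D (of_nat (m choose j) * Q (m - j) * N j n)
          + (if n > 0 then of_nat (m choose j) * Q (m - j) * N j (n - 1) else 0))"
        by (simp add: PS Suc.IH sum.distrib sum_distrib_left deriv_sum[OF dv] if_distrib[of "\<lambda>x. x * N _ _"]
           cong: if_cong)
      also have "\<dots> = A"
        unfolding A_def sum.distrib[symmetric]
      proof (rule sum.cong[OF refl])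
        fix j assume "j \<in> {..m}"
        then have "Suc m - j = Suc (m - j)" by auto
        then show "(a1 + u) * (of_nat (m choose j) * Q (m - j) * N j n)
          + D (of_nat (m choose j) * Q (m - j) * N j n)
          + (if n > 0 then of_nat (m choose j) * Q (m - j) * N j (n - 1) else 0) =
          of_nat (m choose j) * Q (m - j) * N (Suc j) n + of_nat (m choose j) * Q (Suc m - j) * N j n"
          by (simp add: NS QS mult.assoc deriv_mult[OF dv] deriv_of_nat_mult[OF dv] deriv_of_nat[OF dv] of_nat_left_comm algebra_simps)
      qed
      also have "A = (\<Sum>j\<le>Suc m. of_nat (Suc m choose j) * Q (Suc m - j) * N j n)"
      proof -
        have "(\<Sum>j\<le>m. of_nat (m choose j) * Q (Suc m - j) * N j n)
            = (\<Sum>j\<le>Suc m. of_nat (m choose j) * Q (Suc m - j) * N j n)" by (simp add: binomial_eq_0)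
        also have "\<dots> = Q (Suc m) * N 0 n + (\<Sum>j\<le>m. of_nat (m choose Suc j) * Q (m - j) * N (Suc j) n)"
          by (subst sum.atMost_Suc_shift) simp
        finally have e: "(\<Sum>j\<le>m. of_nat (m choose j) * Q (Suc m - j) * N j n)
            = Q (Suc m) * N 0 n + (\<Sum>j\<le>m. of_nat (m choose Suc j) * Q (m - j) * N (Suc j) n)" .
        show ?thesis
          unfolding A_def e
          by (subst sum.atMost_Suc_shift) (simp add: sum.distrib algebra_simps)
      qed
      finally show "P (Suc m) n = (\<Sum>j\<le>Suc m. of_nat (Suc m choose j) * Q (Suc m - j) * N j n)" .
    qed
  qed
  show ?thesis
    unfolding ore_eq_def nab_u
    unfolding nab coef_sum_upt coef_mult_const
    by (simp add: claim[rule_format, unfolded P_def N_def Q_def])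
qed

end
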